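(* Let $(x_n)_{n\ge0}$ be an infinite path in $\Gamma$ with $\ell(x_n)=n$. If $\sum_{n=1}^\infty \frac{1}{\lambda_{x_n}}=\infty$, then $J$ with domain $\mathcal F(\Gamma)$ is essentially selfadjoint in $\ell^2(\Gamma)$.
   Context: Let $\Gamma$ be an infinite connected tree whose vertices are arranged in levels $\ell(x)\in\{0,1,2,\dots\}$: every vertex $x$ is adjacent to exactly one vertex $x'$ with $\ell(x')=\ell(x)+1$; for $\ell(x)\ge 1$ the set $N_x=\{y:\ y'=x\}$ of neighbours of $x$ on level $\ell(x)-1$ is finite and nonempty; $N_x=\emptyset$ if $\ell(x)=0$; there are no other edges. Fix $\lambda_x>0$, $\beta_x\in\mathbb R$. The Jacobi matrix $J$ acts on functions $v:\Gamma\to\mathbb C$ by $(Jv)(x)=\lambda_x v(x')+\beta_x v(x)+\sum_{y\in N_x}\lambda_y v(y)$. $\mathcal F(\Gamma)$ denotes the finitely supported functions; $J$ with domain $\mathcal F(\Gamma)$ is symmetric in $\ell^2(\Gamma)$. *)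

theory Defs
  imports "HOL-Analysis.Analysis"
begin

text \<open>The tree is given by a level function lvl and the parent map p (p x is the
unique neighbour x' of x on the next level). The edges are exactly {x, p x}.
N x = {y. p y = x}.\<close>

definition children :: "('v \<Rightarrow> 'v) \<Rightarrow> 'v \<Rightarrow> 'v set" where
  "children p x = {y. p y = x}"

definition level_tree :: "('v \<Rightarrow> nat) \<Rightarrow> ('v \<Rightarrow> 'v) \<Rightarrow> bool" where
  "level_tree lvl p \<longleftrightarrow>
     (\<forall>x. lvl (p x) = Suc (lvl x)) \<and>
     (\<forall>x. finite (children p x)) \<and>
     (\<forall>x. lvl x \<ge> 1 \<longrightarrow> children p x \<noteq> {}) \<and>
     (\<forall>x. lvl x = 0 \<longrightarrow> children p x = {}) \<and>
     (\<forall>x y. \<exists>n m. (p ^^ n) x = (p ^^ m) y)"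

definition l2 :: "('v \<Rightarrow> complex) set" where
  "l2 = {f. (\<lambda>x. (cmod (f x))\<^sup>2) summable_on UNIV}"

definition l2_norm :: "('v \<Rightarrow> complex) \<Rightarrow> real" where
  "l2_norm f = sqrt (\<Sum>\<^sub>\<infinity>x. (cmod (f x))\<^sup>2)"

definition l2_inner :: "('v \<Rightarrow> complex) \<Rightarrow> ('v \<Rightarrow> complex) \<Rightarrow> complex" where
  "l2_inner f g = (\<Sum>\<^sub>\<infinity>x. cnj (f x) * g x)"

definition fin_supp :: "('v \<Rightarrow> complex) set" where
  "fin_supp = {f. finite {x. f x \<noteq> 0}}"

section \<open>Unbounded operators represented by their graphs\<close>

definition op_domain :: "(('v \<Rightarrow> complex) \<times> ('v \<Rightarrow> complex)) set \<Rightarrow> ('v \<Rightarrow> complex) set" where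
  "op_domain G = fst ` G"

definition densely_defined :: "(('v \<Rightarrow> complex) \<times> ('v \<Rightarrow> complex)) set \<Rightarrow> bool" where
  "densely_defined G \<longleftrightarrow> op_domain G \<subseteq> l2 \<and>
     (\<forall>f\<in>l2. \<exists>F. (\<forall>n. F n \<in> op_domain G) \<and> (\<lambda>n. l2_norm (\<lambda>x. F n x - f x)) \<longlonglongrightarrow> 0)"

definition graph_closure :: "(('v \<Rightarrow> complex) \<times> ('v \<Rightarrow> complex)) set \<Rightarrow> (('v \<Rightarrow> complex) \<times> ('v \<Rightarrow> complex)) set" where
  "graph_closure G = {(f, g). f \<in> l2 \<and> g \<in> l2 \<and>
     (\<exists>F H. (\<forall>n. (F n, H n) \<in> G) \<and>
        (\<lambda>n. l2_norm (\<lambda>x. F n x - f x)) \<longlonglongrightarrow> 0 \<and>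
        (\<lambda>n. l2_norm (\<lambda>x. H n x - g x)) \<longlonglongrightarrow> 0)}"

definition adjoint_graph :: "(('v \<Rightarrow> complex) \<times> ('v \<Rightarrow> complex)) set \<Rightarrow> (('v \<Rightarrow> complex) \<times> ('v \<Rightarrow> complex)) set" where
  "adjoint_graph G = {(u, w). u \<in> l2 \<and> w \<in> l2 \<and>
     (\<forall>(f, g)\<in>G. l2_inner g u = l2_inner f w)}"

definition selfadjoint_op :: "(('v \<Rightarrow> complex) \<times> ('v \<Rightarrow> complex)) set \<Rightarrow> bool" where
  "selfadjoint_op G \<longleftrightarrow> densely_defined G \<and> adjoint_graph G = G"

definition essentially_selfadjoint :: "(('v \<Rightarrow> complex) \<times> ('v \<Rightarrow> complex)) set \<Rightarrow> bool" where
  "essentially_selfadjoint G \<longleftrightarrow> selfadjoint_op (graph_closure G)"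

definition jacobi :: "('v \<Rightarrow> 'v) \<Rightarrow> ('v \<Rightarrow> real) \<Rightarrow> ('v \<Rightarrow> real) \<Rightarrow> ('v \<Rightarrow> complex) \<Rightarrow> ('v \<Rightarrow> complex)" where
  "jacobi p lam beta v = (\<lambda>x. complex_of_real (lam x) * v (p x) + complex_of_real (beta x) * v x
      + (\<Sum>y\<in>children p x. complex_of_real (lam y) * v y))"

definition jacobi_graph :: "('v \<Rightarrow> 'v) \<Rightarrow> ('v \<Rightarrow> real) \<Rightarrow> ('v \<Rightarrow> real) \<Rightarrow> (('v \<Rightarrow> complex) \<times> ('v \<Rightarrow> complex)) set" where
  "jacobi_graph p lam beta = {(v, jacobi p lam beta v) | v. v \<in> fin_supp}"

end

theory Submission
  imports Defs
begin


definition nsq :: "('v \<Rightarrow> complex) \<Rightarrow> real" where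
  "nsq f = (\<Sum>\<^sub>\<infinity>x. (cmod (f x))\<^sup>2)"

lemma l2_norm_nsq: "l2_norm f = sqrt (nsq f)"
  by (simp add: l2_norm_def nsq_def)

lemma nsq_nonneg: "nsq f \<ge> 0"
  unfolding nsq_def by (rule infsum_nonneg) simp

lemma l2_dom:
  assumes "g \<in> l2" "\<And>x. cmod (f x) \<le> cmod (g x)"
  shows "f \<in> l2" "nsq f \<le> nsq g"
proof -
  have s: "(\<lambda>x. (cmod (g x))\<^sup>2) summable_on UNIV" using assms(1) by (simp add: l2_def)
  have le: "(cmod (f x))\<^sup>2 \<le> (cmod (g x))\<^sup>2" for x
    using assms(2)[of x] by (simp add: power_mono)
  have sf: "(\<lambda>x. (cmod (f x))\<^sup>2) summable_on UNIV"
    by (rule summable_on_comparison_test[OF s]) (use le in auto)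
  then show "f \<in> l2" by (simp add: l2_def)
  show "nsq f \<le> nsq g" unfolding nsq_def
    by (rule infsum_mono[OF sf s]) (use le in auto)
qed

lemma sq_add_le: "(cmod (a + b))\<^sup>2 \<le> 2 * (cmod a)\<^sup>2 + 2 * (cmod b)\<^sup>2"
proof -
  have "cmod (a+b) \<le> cmod a + cmod b" by (rule norm_triangle_ineq)
  then have "(cmod (a+b))\<^sup>2 \<le> (cmod a + cmod b)\<^sup>2" by (simp add: power_mono)
  also have "\<dots> = 2 * (cmod a)\<^sup>2 + 2 * (cmod b)\<^sup>2 - (cmod a - cmod b)\<^sup>2"
    by (simp add: power2_eq_square algebra_simps)
  also have "\<dots> \<le> 2 * (cmod a)\<^sup>2 + 2 * (cmod b)\<^sup>2" by simp
  finally show ?thesis .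
qed

lemma l2_add:
  assumes "f \<in> l2" "g \<in> l2"
  shows "(\<lambda>x. f x + g x) \<in> l2" "nsq (\<lambda>x. f x + g x) \<le> 2 * nsq f + 2 * nsq g"
proof -
  have sf: "(\<lambda>x. (cmod (f x))\<^sup>2) summable_on UNIV" using assms(1) by (simp add: l2_def)
  have sg: "(\<lambda>x. (cmod (g x))\<^sup>2) summable_on UNIV" using assms(2) by (simp add: l2_def)
  have s2: "(\<lambda>x. 2 * (cmod (f x))\<^sup>2 + 2 * (cmod (g x))\<^sup>2) summable_on UNIV"
    by (intro summable_on_add summable_on_cmult_right sf sg)
  have s: "(\<lambda>x. (cmod (f x + g x))\<^sup>2) summable_on UNIV"
    by (rule summable_on_comparison_test[OF s2]) (auto intro: sq_add_le)
  then show "(\<lambda>x. f x + g x) \<in> l2" by (simp add: l2_def)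
  have "nsq (\<lambda>x. f x + g x) \<le> (\<Sum>\<^sub>\<infinity>x. 2 * (cmod (f x))\<^sup>2 + 2 * (cmod (g x))\<^sup>2)"
    unfolding nsq_def by (rule infsum_mono[OF s s2]) (auto intro: sq_add_le)
  also have "\<dots> = 2 * nsq f + 2 * nsq g"
    unfolding nsq_def
    by (subst infsum_add) (auto intro!: summable_on_cmult_right sf sg simp: infsum_cmult_right')
  finally show "nsq (\<lambda>x. f x + g x) \<le> 2 * nsq f + 2 * nsq g" .
qed

lemma l2_uminus: "f \<in> l2 \<Longrightarrow> (\<lambda>x. - f x) \<in> l2" "nsq (\<lambda>x. - f x) = nsq f"
  by (simp_all add: l2_def nsq_def)

lemma l2_diff:
  assumes "f \<in> l2" "g \<in> l2"
  shows "(\<lambda>x. f x - g x) \<in> l2" "nsq (\<lambda>x. f x - g x) \<le> 2 * nsq f + 2 * nsq g"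
  using l2_add[OF assms(1) l2_uminus(1)[OF assms(2)]] l2_uminus(2)[of g] by simp_all

lemma fin_l2: "finite {x. f x \<noteq> 0} \<Longrightarrow> f \<in> l2"
  unfolding l2_def
  by (auto intro!: finite_nonzero_values_imp_summable_on elim!: finite_subset[rotated])

lemma fin_supp_l2: "f \<in> fin_supp \<Longrightarrow> f \<in> l2"
  by (simp add: fin_supp_def fin_l2)

lemma l2_point: "f \<in> l2 \<Longrightarrow> (cmod (f x))\<^sup>2 \<le> nsq f"
  unfolding nsq_def l2_def
  using finite_sum_le_infsum[of "\<lambda>x. (cmod (f x))\<^sup>2" UNIV "{x}"] by simp

lemma nsq_tendsto: "(\<lambda>n. l2_norm (F n)) \<longlonglongrightarrow> 0 \<longleftrightarrow> (\<lambda>n. nsq (F n)) \<longlonglongrightarrow> 0"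
proof
  assume "(\<lambda>n. l2_norm (F n)) \<longlonglongrightarrow> 0"
  then have "(\<lambda>n. (l2_norm (F n))\<^sup>2) \<longlonglongrightarrow> 0\<^sup>2" by (intro tendsto_intros)
  then show "(\<lambda>n. nsq (F n)) \<longlonglongrightarrow> 0" by (simp add: l2_norm_nsq nsq_nonneg)
next
  assume "(\<lambda>n. nsq (F n)) \<longlonglongrightarrow> 0"
  then have "(\<lambda>n. sqrt (nsq (F n))) \<longlonglongrightarrow> sqrt 0" by (intro tendsto_intros)
  then show "(\<lambda>n. l2_norm (F n)) \<longlonglongrightarrow> 0" by (simp add: l2_norm_nsq)
qed

lemma nsq_squeeze:
  assumes "\<And>n. nsq (F n) \<le> G n" "G \<longlonglongrightarrow> 0"
  shows "(\<lambda>n. nsq (F n)) \<longlonglongrightarrow> 0"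
  by (rule tendsto_sandwich[of "\<lambda>_. 0" _ _ G]) (use assms nsq_nonneg in \<open>auto intro: always_eventually\<close>)



lemma prod_le_sq: "cmod a * cmod b \<le> ((cmod a)\<^sup>2 + (cmod b)\<^sup>2) / 2"
proof -
  have "0 \<le> (cmod a - cmod b)\<^sup>2" by simp
  then show ?thesis by (simp add: power2_eq_square algebra_simps)
qed

lemma prod_summable:
  assumes "a \<in> l2" "b \<in> l2"
  shows "(\<lambda>x. cmod (a x) * cmod (b x)) summable_on UNIV"
proof -
  have sf: "(\<lambda>x. (cmod (a x))\<^sup>2) summable_on UNIV" using assms(1) by (simp add: l2_def)
  have sg: "(\<lambda>x. (cmod (b x))\<^sup>2) summable_on UNIV" using assms(2) by (simp add: l2_def)
  have "(\<lambda>x. ((cmod (a x))\<^sup>2 + (cmod (b x))\<^sup>2) / 2) summable_on UNIV"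
    using summable_on_cmult_left[OF summable_on_add[OF sf sg], of "1/2"] by simp
  then show ?thesis
    apply (rule summable_on_comparison_test)
     apply (rule prod_le_sq)
    by simp
qed

lemma inner_abs_summable:
  assumes "a \<in> l2" "b \<in> l2"
  shows "(\<lambda>x. norm (cnj (a x) * b x)) summable_on UNIV"
  using prod_summable[OF assms] by (simp add: norm_mult)

lemma inner_summable:
  assumes "a \<in> l2" "b \<in> l2"
  shows "(\<lambda>x. cnj (a x) * b x) summable_on UNIV"
  by (rule abs_summable_summable[OF inner_abs_summable[OF assms]])

lemma prod_bound:
  assumes "a \<in> l2" "b \<in> l2"
  shows "(\<Sum>\<^sub>\<infinity>x. cmod (a x) * cmod (b x)) \<le> l2_norm a * (1 + nsq b) / 2"
proof (cases "nsq a = 0")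
  case True
  then have "a x = 0" for x using l2_point[OF assms(1), of x] by simp
  then show ?thesis using True by (simp add: l2_norm_nsq)
next
  case False
  define t where "t = sqrt (nsq a)"
  have t: "t > 0" using False nsq_nonneg[of a] by (simp add: t_def)
  have tt: "t * t = nsq a" using nsq_nonneg[of a] by (simp add: t_def)
  have sf: "(\<lambda>x. (cmod (a x))\<^sup>2) summable_on UNIV" using assms(1) by (simp add: l2_def)
  have sg: "(\<lambda>x. (cmod (b x))\<^sup>2) summable_on UNIV" using assms(2) by (simp add: l2_def)
  have pw: "cmod (a x) * cmod (b x) \<le> (cmod (a x))\<^sup>2 / (2*t) + t * (cmod (b x))\<^sup>2 / 2" for x
  proof -
    have "0 \<le> (cmod (a x) - t * cmod (b x))\<^sup>2 / (2*t)" using t by simp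
    also have "\<dots> = (cmod (a x))\<^sup>2 / (2*t) + t * (cmod (b x))\<^sup>2 / 2 - cmod (a x) * cmod (b x)"
      using t by (simp add: power2_eq_square field_simps)
    finally show ?thesis by simp
  qed
  have s1: "(\<lambda>x. (cmod (a x))\<^sup>2 / (2*t)) summable_on UNIV"
    using summable_on_cmult_left[OF sf, of "1/(2*t)"] by simp
  have s2: "(\<lambda>x. t * (cmod (b x))\<^sup>2 / 2) summable_on UNIV"
    using summable_on_cmult_right[OF sg, of "t/2"] by simp
  have "(\<Sum>\<^sub>\<infinity>x. cmod (a x) * cmod (b x)) \<le>
        (\<Sum>\<^sub>\<infinity>x. (cmod (a x))\<^sup>2 / (2*t) + t * (cmod (b x))\<^sup>2 / 2)"
    by (rule infsum_mono[OF prod_summable[OF assms] summable_on_add[OF s1 s2]]) (use pw in auto)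
  also have "\<dots> = nsq a / (2*t) + t * nsq b / 2"
    unfolding nsq_def
    apply (subst infsum_add[OF s1 s2])
    using infsum_cmult_left'[of "\<lambda>x. (cmod (a x))\<^sup>2" "1/(2*t)" UNIV]
          infsum_cmult_right'[of "t/2" "\<lambda>x. (cmod (b x))\<^sup>2" UNIV]
    by (simp add: field_simps)
  also have "\<dots> = l2_norm a * (1 + nsq b) / 2"
    using t tt by (simp add: l2_norm_nsq t_def[symmetric] field_simps)
  finally show ?thesis .
qed

lemma inner_bound1:
  assumes "a \<in> l2" "b \<in> l2"
  shows "cmod (l2_inner a b) \<le> l2_norm a * (1 + nsq b) / 2"
proof -
  have "cmod (l2_inner a b) \<le> (\<Sum>\<^sub>\<infinity>x. cmod (cnj (a x) * b x))"
    unfolding l2_inner_def by (rule norm_infsum_bound[OF inner_abs_summable[OF assms]])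
  also have "\<dots> = (\<Sum>\<^sub>\<infinity>x. cmod (a x) * cmod (b x))" by (simp add: norm_mult)
  also have "\<dots> \<le> l2_norm a * (1 + nsq b) / 2" by (rule prod_bound[OF assms])
  finally show ?thesis .
qed

lemma inner_bound2:
  assumes "a \<in> l2" "b \<in> l2"
  shows "cmod (l2_inner a b) \<le> l2_norm b * (1 + nsq a) / 2"
proof -
  have "cmod (l2_inner a b) \<le> (\<Sum>\<^sub>\<infinity>x. cmod (cnj (a x) * b x))"
    unfolding l2_inner_def by (rule norm_infsum_bound[OF inner_abs_summable[OF assms]])
  also have "\<dots> = (\<Sum>\<^sub>\<infinity>x. cmod (b x) * cmod (a x))" by (simp add: norm_mult mult.commute)
  also have "\<dots> \<le> l2_norm b * (1 + nsq a) / 2" by (rule prod_bound[OF assms(2,1)])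
  finally show ?thesis .
qed

lemma inner_diff_right:
  assumes "a \<in> l2" "b \<in> l2" "c \<in> l2"
  shows "l2_inner a b - l2_inner a c = l2_inner a (\<lambda>x. b x - c x)"
proof -
  have s1: "(\<lambda>x. cnj (a x) * b x) summable_on UNIV" by (rule inner_summable[OF assms(1,2)])
  have s2: "(\<lambda>x. - (cnj (a x) * c x)) summable_on UNIV"
    using inner_summable[OF assms(1,3)] by (simp add: summable_on_uminus)
  show ?thesis unfolding l2_inner_def
    using infsum_add[OF s1 s2] infsum_uminus[of "\<lambda>x. cnj (a x) * c x" UNIV]
    by (simp add: algebra_simps)
qed

lemma inner_diff_left:
  assumes "a \<in> l2" "b \<in> l2" "c \<in> l2"
  shows "l2_inner a c - l2_inner b c = l2_inner (\<lambda>x. a x - b x) c"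
proof -
  have s1: "(\<lambda>x. cnj (a x) * c x) summable_on UNIV" by (rule inner_summable[OF assms(1,3)])
  have s2: "(\<lambda>x. - (cnj (b x) * c x)) summable_on UNIV"
    using inner_summable[OF assms(2,3)] by (simp add: summable_on_uminus)
  show ?thesis unfolding l2_inner_def
    using infsum_add[OF s1 s2] infsum_uminus[of "\<lambda>x. cnj (b x) * c x" UNIV]
    by (simp add: algebra_simps)
qed

lemma inner_lim_right:
  assumes "a \<in> l2" "b \<in> l2" "\<And>n. B n \<in> l2"
    and "(\<lambda>n. l2_norm (\<lambda>x. B n x - b x)) \<longlonglongrightarrow> 0"
  shows "(\<lambda>n. l2_inner a (B n)) \<longlonglongrightarrow> l2_inner a b"
proof -
  have d: "(\<lambda>x. B n x - b x) \<in> l2" for n using l2_diff(1)[OF assms(3) assms(2)] .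
  have "(\<lambda>n. l2_inner a (B n) - l2_inner a b) \<longlonglongrightarrow> 0"
  proof (rule tendsto_norm_zero_cancel, rule tendsto_sandwich[of "\<lambda>_. 0" _ _ "\<lambda>n. l2_norm (\<lambda>x. B n x - b x) * (1 + nsq a) / 2"])
    show "\<forall>\<^sub>F n in sequentially. 0 \<le> norm (l2_inner a (B n) - l2_inner a b)" by simp
    show "\<forall>\<^sub>F n in sequentially. norm (l2_inner a (B n) - l2_inner a b) \<le> l2_norm (\<lambda>x. B n x - b x) * (1 + nsq a) / 2"
    proof (intro always_eventually allI)
      fix n
      have "l2_inner a (B n) - l2_inner a b = l2_inner a (\<lambda>x. B n x - b x)"
        by (rule inner_diff_right[OF assms(1) assms(3) assms(2)])
      then show "norm (l2_inner a (B n) - l2_inner a b) \<le> l2_norm (\<lambda>x. B n x - b x) * (1 + nsq a) / 2"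
        using inner_bound2[OF assms(1) d[of n]] by simp
    qed
    show "(\<lambda>n. 0) \<longlonglongrightarrow> (0::real)" by simp
    show "(\<lambda>n. l2_norm (\<lambda>x. B n x - b x) * (1 + nsq a) / 2) \<longlonglongrightarrow> 0"
      using tendsto_mult_right[OF assms(4), of "(1 + nsq a)/2"] by simp
  qed
  then show ?thesis by (simp add: LIM_zero_iff)
qed

lemma inner_lim_left:
  assumes "a \<in> l2" "b \<in> l2" "\<And>n. A n \<in> l2"
    and "(\<lambda>n. l2_norm (\<lambda>x. A n x - a x)) \<longlonglongrightarrow> 0"
  shows "(\<lambda>n. l2_inner (A n) b) \<longlonglongrightarrow> l2_inner a b"
proof -
  have d: "(\<lambda>x. A n x - a x) \<in> l2" for n using l2_diff(1)[OF assms(3) assms(1)] .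
  have "(\<lambda>n. l2_inner (A n) b - l2_inner a b) \<longlonglongrightarrow> 0"
  proof (rule tendsto_norm_zero_cancel, rule tendsto_sandwich[of "\<lambda>_. 0" _ _ "\<lambda>n. l2_norm (\<lambda>x. A n x - a x) * (1 + nsq b) / 2"])
    show "\<forall>\<^sub>F n in sequentially. 0 \<le> norm (l2_inner (A n) b - l2_inner a b)" by simp
    show "\<forall>\<^sub>F n in sequentially. norm (l2_inner (A n) b - l2_inner a b) \<le> l2_norm (\<lambda>x. A n x - a x) * (1 + nsq b) / 2"
    proof (intro always_eventually allI)
      fix n
      have "l2_inner (A n) b - l2_inner a b = l2_inner (\<lambda>x. A n x - a x) b"
        by (rule inner_diff_left[OF assms(3) assms(1) assms(2)])
      then show "norm (l2_inner (A n) b - l2_inner a b) \<le> l2_norm (\<lambda>x. A n x - a x) * (1 + nsq b) / 2"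
        using inner_bound1[OF d[of n] assms(2)] by simp
    qed
    show "(\<lambda>n. 0) \<longlonglongrightarrow> (0::real)" by simp
    show "(\<lambda>n. l2_norm (\<lambda>x. A n x - a x) * (1 + nsq b) / 2) \<longlonglongrightarrow> 0"
      using tendsto_mult_right[OF assms(4), of "(1 + nsq b)/2"] by simp
  qed
  then show ?thesis by (simp add: LIM_zero_iff)
qed

lemma tail:
  assumes "u \<in> l2" "e > 0"
  shows "\<exists>F. finite F \<and> (\<forall>\<phi>::'v\<Rightarrow>real. (\<forall>x\<in>F. \<phi> x = 1) \<longrightarrow> (\<forall>x. 0 \<le> \<phi> x \<and> \<phi> x \<le> 1)
           \<longrightarrow> nsq (\<lambda>x. complex_of_real (\<phi> x) * u x - u x) \<le> e)"
proof -
  let ?g = "\<lambda>x. (cmod (u x))\<^sup>2"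
  have s: "?g summable_on UNIV" using assms(1) by (simp add: l2_def)
  obtain F where F: "finite F" "dist (sum ?g F) (infsum ?g UNIV) \<le> e"
    using infsum_finite_approximation[OF s assms(2)] by blast
  have sF: "?g summable_on (UNIV - F)" by (rule summable_on_subset[OF s]) auto
  have "infsum ?g UNIV = infsum ?g (F \<union> (UNIV - F))" by simp
  also have "\<dots> = sum ?g F + infsum ?g (UNIV - F)"
    by (subst infsum_Un_disjoint) (use F(1) sF in auto)
  finally have eq: "infsum ?g (UNIV - F) = infsum ?g UNIV - sum ?g F" by simp
  have le: "infsum ?g (UNIV - F) \<le> e" using F(2) eq by (simp add: dist_real_def)
  show ?thesis
  proof (intro exI[of _ F] conjI allI impI)
    show "finite F" by fact
    fix \<phi> :: "'v \<Rightarrow> real"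
    assume one: "\<forall>x\<in>F. \<phi> x = 1" and b: "\<forall>x. 0 \<le> \<phi> x \<and> \<phi> x \<le> 1"
    let ?h = "\<lambda>x. if x \<in> F then 0 else ?g x"
    have hs: "?h summable_on UNIV"
      using sF by (rule summable_on_cong_neutral[THEN iffD1, rotated -1]) auto
    have pw: "(cmod (complex_of_real (\<phi> x) * u x - u x))\<^sup>2 \<le> ?h x" for x
    proof -
      have "complex_of_real (\<phi> x) * u x - u x = complex_of_real (\<phi> x - 1) * u x"
        by (simp add: algebra_simps)
      then have "cmod (complex_of_real (\<phi> x) * u x - u x) = \<bar>\<phi> x - 1\<bar> * cmod (u x)"
        by (simp only: norm_mult norm_of_real)
      also have "\<dots> \<le> (if x \<in> F then 0 else cmod (u x))"
        using one b[rule_format, of x] by (auto intro!: mult_left_le_one_le)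
      finally have "cmod (complex_of_real (\<phi> x) * u x - u x) \<le> (if x \<in> F then 0 else cmod (u x))" .
      then show ?thesis by (auto simp: power_mono)
    qed
    have s2: "(\<lambda>x. (cmod (complex_of_real (\<phi> x) * u x - u x))\<^sup>2) summable_on UNIV"
      by (rule summable_on_comparison_test[OF hs]) (use pw in auto)
    have "nsq (\<lambda>x. complex_of_real (\<phi> x) * u x - u x) \<le> infsum ?h UNIV"
      unfolding nsq_def by (rule infsum_mono[OF s2 hs]) (use pw in auto)
    also have "infsum ?h UNIV = infsum ?g (UNIV - F)"
      by (rule infsum_cong_neutral) auto
    finally show "nsq (\<lambda>x. complex_of_real (\<phi> x) * u x - u x) \<le> e" using le by simp
  qed
qed



lemma infsum_fin:
  assumes "finite S" "\<And>x. x \<notin> S \<Longrightarrow> g x = 0"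
  shows "infsum g UNIV = sum g S"
proof -
  have "infsum g UNIV = infsum g S" by (rule infsum_cong_neutral) (use assms in auto)
  then show ?thesis using assms(1) by simp
qed

lemma children_disj: "i \<noteq> j \<Longrightarrow> children p i \<inter> children p j = {}"
  by (auto simp: children_def)

lemma sum_children:
  assumes fin: "\<forall>x. finite (children p x)" and I: "finite I"
  shows "(\<Sum>z\<in>I. \<Sum>x\<in>children p z. g x) = (\<Sum>x\<in>(\<Union>z\<in>I. children p z). g x)"
  by (rule sum.UNION_disjoint[symmetric]) (use I fin in \<open>auto simp: children_def\<close>)

lemma jac_sym:
  assumes fin: "\<forall>x. finite (children p x)" and f: "f \<in> fin_supp"
  shows "l2_inner (jacobi p lam beta f) u = l2_inner f (jacobi p lam beta u)"
proof -
  define S where "S = {x. f x \<noteq> 0}"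
  have S: "finite S" using f by (simp add: fin_supp_def S_def)
  have fz: "x \<notin> S \<Longrightarrow> f x = 0" for x by (simp add: S_def)
  define S' where "S' = S \<union> p ` S \<union> (\<Union>z\<in>S. children p z)"
  have S': "finite S'" using S fin by (simp add: S'_def)
  have chp: "x \<in> children p (p x)" for x by (simp add: children_def)
  have Jz: "jacobi p lam beta f x = 0" if "x \<notin> S'" for x
  proof -
    have "f x = 0" using that fz by (auto simp: S'_def)
    moreover have "f (p x) = 0" using that fz chp by (auto simp: S'_def)
    moreover have "\<forall>y\<in>children p x. f y = 0"
      using that fz by (force simp: S'_def children_def)
    ultimately show ?thesis by (simp add: jacobi_def)
  qed
  let ?c = "\<lambda>r. complex_of_real r"
  have "l2_inner (jacobi p lam beta f) u = (\<Sum>x\<in>S'. cnj (jacobi p lam beta f x) * u x)"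
    unfolding l2_inner_def by (rule infsum_fin[OF S']) (simp add: Jz)
  also have "\<dots> = (\<Sum>x\<in>S'. ?c (lam x) * cnj (f (p x)) * u x)
      + (\<Sum>x\<in>S'. ?c (beta x) * cnj (f x) * u x)
      + (\<Sum>x\<in>S'. \<Sum>y\<in>children p x. ?c (lam y) * cnj (f y) * u x)"
  proof -
    have cj: "cnj (jacobi p lam beta f x) * u x = ?c (lam x) * cnj (f (p x)) * u x + ?c (beta x) * cnj (f x) * u x
       + (\<Sum>y\<in>children p x. ?c (lam y) * cnj (f y) * u x)" for x
    proof -
      have "cnj (jacobi p lam beta f x) = ?c (lam x) * cnj (f (p x)) + ?c (beta x) * cnj (f x)
        + (\<Sum>y\<in>children p x. ?c (lam y) * cnj (f y))" by (simp add: jacobi_def)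
      then show ?thesis by (simp only: distrib_right sum_distrib_right)
    qed
    show ?thesis by (simp only: cj sum.distrib)
  qed
  also have "(\<Sum>x\<in>S'. ?c (lam x) * cnj (f (p x)) * u x)
      = (\<Sum>z\<in>S. \<Sum>x\<in>children p z. cnj (f z) * (?c (lam x) * u x))"
  proof -
    have "(\<Sum>z\<in>S. \<Sum>x\<in>children p z. cnj (f z) * (?c (lam x) * u x))
        = (\<Sum>z\<in>S. \<Sum>x\<in>children p z. ?c (lam x) * cnj (f (p x)) * u x)"
      by (intro sum.cong refl) (simp add: children_def algebra_simps)
    also have "\<dots> = (\<Sum>x\<in>(\<Union>z\<in>S. children p z). ?c (lam x) * cnj (f (p x)) * u x)"
      by (rule sum_children[OF fin S])
    also have "\<dots> = (\<Sum>x\<in>S'. ?c (lam x) * cnj (f (p x)) * u x)"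
    proof (rule sum.mono_neutral_left[OF S'])
      show "(\<Union>z\<in>S. children p z) \<subseteq> S'" by (auto simp: S'_def)
      show "\<forall>i\<in>S' - (\<Union>z\<in>S. children p z). ?c (lam i) * cnj (f (p i)) * u i = 0"
      proof
        fix i assume "i \<in> S' - (\<Union>z\<in>S. children p z)"
        then have "p i \<notin> S" using chp by blast
        then show "?c (lam i) * cnj (f (p i)) * u i = 0" by (simp add: fz)
      qed
    qed
    finally show ?thesis by simp
  qed
  also have "(\<Sum>x\<in>S'. ?c (beta x) * cnj (f x) * u x) = (\<Sum>z\<in>S. cnj (f z) * (?c (beta z) * u z))"
  proof -
    have "(\<Sum>z\<in>S. cnj (f z) * (?c (beta z) * u z)) = (\<Sum>x\<in>S'. cnj (f x) * (?c (beta x) * u x))"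
      by (rule sum.mono_neutral_left[OF S']) (auto simp: S'_def fz)
    then show ?thesis by (simp add: algebra_simps)
  qed
  also have "(\<Sum>x\<in>S'. \<Sum>y\<in>children p x. ?c (lam y) * cnj (f y) * u x)
      = (\<Sum>z\<in>S. cnj (f z) * (?c (lam z) * u (p z)))"
  proof -
    have "(\<Sum>x\<in>S'. \<Sum>y\<in>children p x. ?c (lam y) * cnj (f y) * u x)
        = (\<Sum>x\<in>S'. \<Sum>y\<in>children p x. ?c (lam y) * cnj (f y) * u (p y))"
      by (intro sum.cong refl) (simp add: children_def)
    also have "\<dots> = (\<Sum>y\<in>(\<Union>x\<in>S'. children p x). ?c (lam y) * cnj (f y) * u (p y))"
      by (rule sum_children[OF fin S'])
    also have "\<dots> = (\<Sum>y\<in>S. ?c (lam y) * cnj (f y) * u (p y))"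
    proof (rule sum.mono_neutral_right)
      show "finite (\<Union>x\<in>S'. children p x)" using S' fin by simp
      show "S \<subseteq> (\<Union>x\<in>S'. children p x)" using chp by (auto simp: S'_def)
      show "\<forall>i\<in>(\<Union>x\<in>S'. children p x) - S. ?c (lam i) * cnj (f i) * u (p i) = 0"
        using fz by auto
    qed
    finally show ?thesis by (simp add: algebra_simps)
  qed
  also have "(\<Sum>z\<in>S. \<Sum>x\<in>children p z. cnj (f z) * (?c (lam x) * u x))
      + (\<Sum>z\<in>S. cnj (f z) * (?c (beta z) * u z))
      + (\<Sum>z\<in>S. cnj (f z) * (?c (lam z) * u (p z)))
      = (\<Sum>z\<in>S. cnj (f z) * jacobi p lam beta u z)"
  proof -
    have pw: "cnj (f z) * jacobi p lam beta u z = (\<Sum>x\<in>children p z. cnj (f z) * (?c (lam x) * u x))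
      + cnj (f z) * (?c (beta z) * u z) + cnj (f z) * (?c (lam z) * u (p z))" for z
    proof -
      have "cnj (f z) * jacobi p lam beta u z = cnj (f z) * (?c (lam z) * u (p z)) + cnj (f z) * (?c (beta z) * u z)
        + (\<Sum>x\<in>children p z. cnj (f z) * (?c (lam x) * u x))"
        by (simp only: jacobi_def distrib_left sum_distrib_left)
      then show ?thesis by (simp only: add_ac)
    qed
    show ?thesis by (simp only: pw sum.distrib)
  qed
  also have "\<dots> = l2_inner f (jacobi p lam beta u)"
    unfolding l2_inner_def by (rule infsum_fin[OF S, symmetric]) (simp add: fz)
  finally show ?thesis .
qed



lemma reindex_bound:
  assumes u: "u \<in> l2" and inj: "inj_on h S"
  shows "(\<lambda>x. if x \<in> S then (cmod (u (h x)))\<^sup>2 else 0) summable_on UNIV"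
    "(\<Sum>\<^sub>\<infinity>x. if x \<in> S then (cmod (u (h x)))\<^sup>2 else 0) \<le> nsq u"
proof -
  let ?g = "\<lambda>x. (cmod (u x))\<^sup>2"
  have s: "?g summable_on UNIV" using u by (simp add: l2_def)
  have s1: "?g summable_on (h ` S)" by (rule summable_on_subset[OF s]) auto
  then have s2: "(?g \<circ> h) summable_on S" using summable_on_reindex[OF inj] by blast
  have eq: "(\<Sum>\<^sub>\<infinity>x. if x \<in> S then (cmod (u (h x)))\<^sup>2 else 0) = infsum (?g \<circ> h) S"
    by (rule infsum_cong_neutral) auto
  show "(\<lambda>x. if x \<in> S then (cmod (u (h x)))\<^sup>2 else 0) summable_on UNIV"
    using s2 by (rule summable_on_cong_neutral[THEN iffD1, rotated -1]) auto
  have "infsum (?g \<circ> h) S = infsum ?g (h ` S)" by (rule infsum_reindex[OF inj, symmetric])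
  also have "\<dots> \<le> infsum ?g UNIV" by (rule infsum_mono2[OF s1 s]) auto
  finally show "(\<Sum>\<^sub>\<infinity>x. if x \<in> S then (cmod (u (h x)))\<^sup>2 else 0) \<le> nsq u"
    using eq by (simp add: nsq_def)
qed

lemma clamp_lip: "\<bar>max 0 (min 1 a) - max 0 (min 1 b)\<bar> \<le> \<bar>a - b :: real\<bar>"
  by (auto simp: max_def min_def abs_if)

locale spine =
  fixes lvl :: "'v \<Rightarrow> nat" and p :: "'v \<Rightarrow> 'v" and lam :: "'v \<Rightarrow> real" and xs :: "nat \<Rightarrow> 'v"
  assumes tree: "level_tree lvl p"
    and lam_pos: "\<forall>x. lam x > 0"
    and lvl_xs: "\<forall>n. lvl (xs n) = n"
    and p_xs: "\<forall>n. p (xs n) = xs (Suc n)"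
    and divg: "\<not> summable (\<lambda>n. 1 / lam (xs (Suc n)))"
begin

lemma lvl_p: "lvl (p x) = Suc (lvl x)" using tree by (simp add: level_tree_def)
lemma fin_ch: "\<forall>x. finite (children p x)" using tree by (simp add: level_tree_def)
lemma conn: "\<exists>n m. (p ^^ n) x = (p ^^ m) y" using tree by (simp add: level_tree_def)

lemma lvl_pow: "lvl ((p ^^ j) x) = lvl x + j"
  by (induction j) (auto simp: lvl_p)

lemma xs_pow: "(p ^^ j) (xs m) = xs (m + j)"
  by (induction j) (auto simp: p_xs)

lemma xs_inj: "xs i = xs j \<longleftrightarrow> i = j"
  by (metis lvl_xs)

definition T :: "nat \<Rightarrow> 'v set" where "T m = {y. \<exists>j. (p ^^ j) y = xs m}"

lemma fin_pre: "finite {y. (p ^^ j) y = z}"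
proof (induction j arbitrary: z)
  case 0 then show ?case by simp
next
  case (Suc j)
  have "{y. (p ^^ Suc j) y = z} = (\<Union>w\<in>{w. (p ^^ j) w = z}. children p w)"
    by (auto simp: children_def funpow_swap1)
  then show ?case using Suc fin_ch by simp
qed

lemma T_fin: "finite (T m)"
proof -
  have "T m \<subseteq> (\<Union>j\<in>{..m}. {y. (p ^^ j) y = xs m})"
  proof
    fix y assume "y \<in> T m"
    then obtain j where j: "(p ^^ j) y = xs m" by (auto simp: T_def)
    then have "lvl y + j = m" using lvl_pow[of j y] lvl_xs by simp
    then show "y \<in> (\<Union>j\<in>{..m}. {y. (p ^^ j) y = xs m})" using j by auto
  qed
  then show ?thesis by (rule finite_subset) (simp add: fin_pre)
qed

lemma T_mono: "m \<le> m' \<Longrightarrow> T m \<subseteq> T m'"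
proof
  fix y assume mm: "m \<le> m'" and "y \<in> T m"
  then obtain j where j: "(p ^^ j) y = xs m" by (auto simp: T_def)
  have "(p ^^ ((m' - m) + j)) y = (p ^^ (m' - m)) ((p ^^ j) y)" by (simp add: funpow_add)
  also have "\<dots> = xs m'" using j mm by (simp add: xs_pow)
  finally show "y \<in> T m'" by (auto simp: T_def)
qed

lemma T_cover: "\<exists>m. x \<in> T m"
proof -
  obtain n m where "(p ^^ n) x = (p ^^ m) (xs 0)" using conn by blast
  then have "(p ^^ n) x = xs m" by (simp add: xs_pow)
  then show ?thesis by (auto simp: T_def)
qed

lemma T_step: "y \<notin> range xs \<Longrightarrow> y \<in> T m \<longleftrightarrow> p y \<in> T m"
proof
  assume ny: "y \<notin> range xs" and "y \<in> T m"
  then obtain j where j: "(p ^^ j) y = xs m" by (auto simp: T_def)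
  show "p y \<in> T m"
  proof (cases j)
    case 0 then show ?thesis using j ny by auto
  next
    case (Suc k)
    then have "(p ^^ k) (p y) = xs m" using j by (simp add: funpow_swap1)
    then show ?thesis by (auto simp: T_def)
  qed
next
  assume "p y \<in> T m"
  then obtain k where "(p ^^ k) (p y) = xs m" by (auto simp: T_def)
  then have "(p ^^ Suc k) y = xs m" by (simp add: funpow_swap1)
  then show "y \<in> T m" unfolding T_def by blast
qed

lemma xs_T: "xs k \<in> T m \<longleftrightarrow> k \<le> m"
proof
  assume "xs k \<in> T m"
  then obtain j where "(p ^^ j) (xs k) = xs m" by (auto simp: T_def)
  then have "k + j = m" by (simp add: xs_pow xs_inj)
  then show "k \<le> m" by simp
next
  assume "k \<le> m"
  then have "(p ^^ (m - k)) (xs k) = xs m" by (simp add: xs_pow)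
  then show "xs k \<in> T m" by (auto simp: T_def)
qed

definition blk :: "'v \<Rightarrow> nat" where "blk x = (LEAST m. x \<in> T m)"

lemma T_blk: "x \<in> T m \<longleftrightarrow> blk x \<le> m"
proof
  assume "x \<in> T m" then show "blk x \<le> m" unfolding blk_def by (rule Least_le)
next
  assume "blk x \<le> m"
  moreover have "x \<in> T (blk x)" unfolding blk_def by (rule LeastI_ex[OF T_cover])
  ultimately show "x \<in> T m" using T_mono by blast
qed

lemma blk_xs: "blk (xs k) = k"
  by (metis T_blk xs_T order_antisym order_refl)

lemma blk_p: "y \<notin> range xs \<Longrightarrow> blk (p y) = blk y"
  by (metis T_blk T_step order_antisym order_refl)

definition L :: "nat \<Rightarrow> real" where "L k = (\<Sum>j<k. 1 / lam (xs j))"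

lemma L_Suc: "L (Suc k) = L k + 1 / lam (xs k)" by (simp add: L_def)

lemma L_mono: "k \<le> k' \<Longrightarrow> L k \<le> L k'"
  unfolding L_def by (rule sum_mono2) (use lam_pos in \<open>auto intro: less_imp_le\<close>)

lemma L_unb: "\<exists>k. B < L k"
proof (rule ccontr)
  assume "\<not> (\<exists>k. B < L k)"
  then have b: "(\<Sum>j<n. 1 / lam (xs j)) \<le> B" for n by (auto simp: L_def not_less)
  have "summable (\<lambda>j. 1 / lam (xs j))"
    by (rule summableI_nonneg_bounded[OF _ b]) (use lam_pos in \<open>auto intro: less_imp_le\<close>)
  then show False using divg summable_Suc_iff[of "\<lambda>j. 1 / lam (xs j)"] by simp
qed

definition psi :: "nat \<Rightarrow> nat \<Rightarrow> real" where
  "psi N k = max 0 (min 1 (2 - L k / real (Suc N)))"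

definition cut :: "nat \<Rightarrow> 'v \<Rightarrow> real" where "cut N x = psi N (blk x)"

lemma cut_bounds: "0 \<le> cut N x" "cut N x \<le> 1"
  by (auto simp: cut_def psi_def)

lemma cut_one: "L (blk x) \<le> real (Suc N) \<Longrightarrow> cut N x = 1"
  by (auto simp: cut_def psi_def field_simps)

lemma cut_fin: "finite {x. cut N x \<noteq> 0}"
proof -
  obtain K where K: "2 * real (Suc N) < L K" using L_unb by blast
  have "{x. cut N x \<noteq> 0} \<subseteq> T K"
  proof
    fix x assume "x \<in> {x. cut N x \<noteq> 0}"
    then have "L (blk x) < 2 * real (Suc N)"
    proof (rule contrapos_pp)
      assume "\<not> L (blk x) < 2 * real (Suc N)"
      then have "2 \<le> L (blk x) / real (Suc N)" by (simp add: le_divide_eq)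
      then show "\<not> x \<in> {x. cut N x \<noteq> 0}" by (simp add: cut_def psi_def)
    qed
    then have "blk x \<le> K" using K L_mono[of K "blk x"] by (cases "blk x \<le> K") auto
    then show "x \<in> T K" by (simp add: T_blk)
  qed
  then show ?thesis using T_fin finite_subset by blast
qed

lemma cut_eventually_one:
  assumes "finite F"
  shows "\<exists>N0. \<forall>N\<ge>N0. \<forall>x\<in>F. cut N x = 1"
proof -
  obtain N0 :: nat where N0: "\<forall>x\<in>F. L (blk x) \<le> real N0"
  proof -
    have "finite ((\<lambda>x. L (blk x)) ` F)" using assms by simp
    then obtain M where "\<forall>x\<in>F. L (blk x) \<le> M"
      by (meson finite_imageI assms finite_nat_set_iff_bounded_le bdd_above_def
          bdd_above_finite finite_imageI image_eqI)
    moreover obtain n :: nat where "M \<le> real n" using real_arch_simple by blast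
    ultimately show ?thesis by (intro that[of n]) (meson order_trans)
  qed
  show ?thesis
  proof (intro exI allI impI ballI)
    fix N x assume "N0 \<le> N" "x \<in> F"
    then have "L (blk x) \<le> real (Suc N)" using N0 by force
    then show "cut N x = 1" by (rule cut_one)
  qed
qed

definition edge :: "nat \<Rightarrow> 'v \<Rightarrow> real" where "edge N y = lam y * (cut N (p y) - cut N y)"

lemma edge_off: "y \<notin> range xs \<Longrightarrow> edge N y = 0"
  by (simp add: edge_def cut_def blk_p)

lemma edge_bound: "\<bar>edge N y\<bar> \<le> 1 / real (Suc N)"
proof (cases "y \<in> range xs")
  case False then show ?thesis by (simp add: edge_off)
next
  case True
  then obtain k where y: "y = xs k" by auto
  have l: "lam y > 0" using lam_pos by simp
  have "\<bar>cut N (p y) - cut N y\<bar> = \<bar>psi N (Suc k) - psi N k\<bar>"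
    by (simp add: y cut_def p_xs blk_xs)
  also have "\<dots> \<le> \<bar>(2 - L (Suc k) / real (Suc N)) - (2 - L k / real (Suc N))\<bar>"
    unfolding psi_def by (rule clamp_lip)
  also have "\<dots> = 1 / (lam y * real (Suc N))"
  proof -
    have "(2 - L (Suc k) / real (Suc N)) - (2 - L k / real (Suc N)) = - (1 / lam y) / real (Suc N)"
      by (simp add: L_Suc y diff_divide_distrib add_divide_distrib)
    then show ?thesis using l by simp
  qed
  finally have "\<bar>cut N (p y) - cut N y\<bar> \<le> 1 / (lam y * real (Suc N))" .
  then have "lam y * \<bar>cut N (p y) - cut N y\<bar> \<le> lam y * (1 / (lam y * real (Suc N)))"
    using l by (intro mult_left_mono) auto
  then show ?thesis using l by (simp add: edge_def abs_mult)
qed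

end


context spine begin

definition S1 :: "'v set" where "S1 = range (\<lambda>k. xs (Suc k))"
definition q :: "'v \<Rightarrow> 'v" where "q x = xs (lvl x - 1)"

lemma inj_p: "inj_on p (range xs)"
  by (auto simp: inj_on_def p_xs xs_inj)

lemma inj_q: "inj_on q S1"
  by (auto simp: inj_on_def S1_def q_def lvl_xs xs_inj)

lemma comm_formula:
  "jacobi p lam beta (\<lambda>x. complex_of_real (cut N x) * u x) x - complex_of_real (cut N x) * jacobi p lam beta u x
   = complex_of_real (edge N x) * u (p x) - (\<Sum>y\<in>children p x. complex_of_real (edge N y) * u y)"
proof -
  let ?c = "\<lambda>r. complex_of_real r"
  have "(\<Sum>y\<in>children p x. ?c (edge N y) * u y)
      = (\<Sum>y\<in>children p x. ?c (cut N x) * (?c (lam y) * u y) - ?c (lam y) * (?c (cut N y) * u y))"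
    by (intro sum.cong refl) (simp add: children_def edge_def algebra_simps)
  also have "\<dots> = ?c (cut N x) * (\<Sum>y\<in>children p x. ?c (lam y) * u y)
      - (\<Sum>y\<in>children p x. ?c (lam y) * (?c (cut N y) * u y))"
    by (simp only: sum_subtractf sum_distrib_left)
  finally have s: "(\<Sum>y\<in>children p x. ?c (edge N y) * u y) = \<dots>" .
  show ?thesis unfolding s by (simp add: jacobi_def edge_def algebra_simps)
qed

lemma B_formula:
  "(\<Sum>y\<in>children p x. complex_of_real (edge N y) * u y)
   = (if x \<in> S1 then complex_of_real (edge N (q x)) * u (q x) else 0)"
proof (cases "x \<in> S1")
  case True
  then obtain k where x: "x = xs (Suc k)" by (auto simp: S1_def)
  have qx: "q x = xs k" by (simp add: x q_def lvl_xs)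
  have mem: "xs k \<in> children p x" by (simp add: children_def x p_xs)
  have rest: "\<forall>y\<in>children p x - {xs k}. complex_of_real (edge N y) * u y = 0"
  proof
    fix y assume y: "y \<in> children p x - {xs k}"
    have "y \<notin> range xs"
    proof
      assume "y \<in> range xs"
      then obtain j where "y = xs j" by auto
      then show False using y by (auto simp: children_def x p_xs xs_inj)
    qed
    then show "complex_of_real (edge N y) * u y = 0" by (simp add: edge_off)
  qed
  have "(\<Sum>y\<in>children p x. complex_of_real (edge N y) * u y)
      = complex_of_real (edge N (xs k)) * u (xs k) + (\<Sum>y\<in>children p x - {xs k}. complex_of_real (edge N y) * u y)"
    by (rule sum.remove[OF _ mem]) (simp add: fin_ch)
  also have "\<dots> = complex_of_real (edge N (xs k)) * u (xs k)" by (subst sum.neutral[OF rest]) simp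
  finally show ?thesis using True qx by simp
next
  case False
  have "\<forall>y\<in>children p x. complex_of_real (edge N y) * u y = 0"
  proof
    fix y assume y: "y \<in> children p x"
    have "y \<notin> range xs"
    proof
      assume "y \<in> range xs"
      then obtain j where "y = xs j" by auto
      then have "x = xs (Suc j)" using y by (auto simp: children_def p_xs)
      then show False using False by (auto simp: S1_def)
    qed
    then show "complex_of_real (edge N y) * u y = 0" by (simp add: edge_off)
  qed
  then show ?thesis using False by (subst sum.neutral) auto
qed

definition comm :: "('v \<Rightarrow> real) \<Rightarrow> nat \<Rightarrow> ('v \<Rightarrow> complex) \<Rightarrow> 'v \<Rightarrow> complex" where
  "comm beta N u x = jacobi p lam beta (\<lambda>x. complex_of_real (cut N x) * u x) x
     - complex_of_real (cut N x) * jacobi p lam beta u x"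

lemma comm_bound:
  assumes u: "u \<in> l2"
  shows "comm beta N u \<in> l2" "nsq (comm beta N u) \<le> 4 * (1 / real (Suc N))\<^sup>2 * nsq u"
proof -
  define e where "e = 1 / real (Suc N)"
  have e0: "e \<ge> 0" by (simp add: e_def)
  define G1 where "G1 = (\<lambda>x. if x \<in> range xs then (cmod (u (p x)))\<^sup>2 else 0)"
  define G2 where "G2 = (\<lambda>x. if x \<in> S1 then (cmod (u (q x)))\<^sup>2 else 0)"
  have s1: "G1 summable_on UNIV" "infsum G1 UNIV \<le> nsq u"
    using reindex_bound[OF u inj_p] by (simp_all add: G1_def)
  have s2: "G2 summable_on UNIV" "infsum G2 UNIV \<le> nsq u"
    using reindex_bound[OF u inj_q] by (simp_all add: G2_def)
  have eb: "\<bar>edge N y\<bar> \<le> e" for y using edge_bound by (simp add: e_def)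
  have sqb: "(\<bar>edge N y\<bar> * r)\<^sup>2 \<le> e\<^sup>2 * r\<^sup>2" if "r \<ge> 0" for y r
  proof -
    have "\<bar>edge N y\<bar> * r \<le> e * r" using eb that by (simp add: mult_right_mono)
    then have "(\<bar>edge N y\<bar> * r)\<^sup>2 \<le> (e * r)\<^sup>2" by (rule power_mono) (use that in simp)
    then show ?thesis by (simp add: power_mult_distrib)
  qed
  have A: "(cmod (complex_of_real (edge N x) * u (p x)))\<^sup>2 \<le> e\<^sup>2 * G1 x" for x
  proof (cases "x \<in> range xs")
    case True then show ?thesis using sqb[of "cmod (u (p x))" x] by (simp add: G1_def norm_mult)
  next
    case False then show ?thesis by (simp add: G1_def edge_off)
  qed
  have B: "(cmod (- (\<Sum>y\<in>children p x. complex_of_real (edge N y) * u y)))\<^sup>2 \<le> e\<^sup>2 * G2 x" for x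
  proof (cases "x \<in> S1")
    case True then show ?thesis using sqb[of "cmod (u (q x))" "q x"] by (simp add: B_formula G2_def norm_mult)
  next
    case False then show ?thesis by (simp add: B_formula G2_def)
  qed
  have pw: "(cmod (comm beta N u x))\<^sup>2 \<le> 2 * e\<^sup>2 * G1 x + 2 * e\<^sup>2 * G2 x" for x
  proof -
    have "comm beta N u x = complex_of_real (edge N x) * u (p x) + - (\<Sum>y\<in>children p x. complex_of_real (edge N y) * u y)"
      unfolding comm_def comm_formula by simp
    then have "(cmod (comm beta N u x))\<^sup>2 \<le> 2 * (cmod (complex_of_real (edge N x) * u (p x)))\<^sup>2
        + 2 * (cmod (- (\<Sum>y\<in>children p x. complex_of_real (edge N y) * u y)))\<^sup>2"
      using sq_add_le by metis
    then show ?thesis using A[of x] B[of x] by simp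
  qed
  have sG: "(\<lambda>x. 2 * e\<^sup>2 * G1 x + 2 * e\<^sup>2 * G2 x) summable_on UNIV"
    by (intro summable_on_add summable_on_cmult_right s1(1) s2(1))
  have sC: "(\<lambda>x. (cmod (comm beta N u x))\<^sup>2) summable_on UNIV"
    by (rule summable_on_comparison_test[OF sG]) (use pw in auto)
  then show "comm beta N u \<in> l2" by (simp add: l2_def)
  have "nsq (comm beta N u) \<le> (\<Sum>\<^sub>\<infinity>x. 2 * e\<^sup>2 * G1 x + 2 * e\<^sup>2 * G2 x)"
    unfolding nsq_def by (rule infsum_mono[OF sC sG]) (use pw in auto)
  also have "\<dots> = 2 * e\<^sup>2 * infsum G1 UNIV + 2 * e\<^sup>2 * infsum G2 UNIV"
    by (subst infsum_add) (auto intro!: summable_on_cmult_right s1(1) s2(1) simp: infsum_cmult_right')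
  also have "\<dots> \<le> 2 * e\<^sup>2 * nsq u + 2 * e\<^sup>2 * nsq u"
    using s1(2) s2(2) e0 by (intro add_mono mult_left_mono) auto
  finally show "nsq (comm beta N u) \<le> 4 * (1 / real (Suc N))\<^sup>2 * nsq u" by (simp add: e_def algebra_simps)
qed

end


lemma jac_fin:
  assumes fin: "\<forall>x. finite (children p x)" and f: "f \<in> fin_supp"
  shows "jacobi p lam beta f \<in> fin_supp"
proof -
  define S where "S = {x. f x \<noteq> 0}"
  have S: "finite S" using f by (simp add: fin_supp_def S_def)
  have fz: "x \<notin> S \<Longrightarrow> f x = 0" for x by (simp add: S_def)
  define S' where "S' = S \<union> p ` S \<union> (\<Union>z\<in>S. children p z)"
  have S': "finite S'" using S fin by (simp add: S'_def)
  have chp: "x \<in> children p (p x)" for x by (simp add: children_def)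
  have Jz: "jacobi p lam beta f x = 0" if "x \<notin> S'" for x
  proof -
    have "f x = 0" using that fz by (auto simp: S'_def)
    moreover have "f (p x) = 0" using that fz chp by (auto simp: S'_def)
    moreover have "\<forall>y\<in>children p x. f y = 0"
      using that fz by (force simp: S'_def children_def)
    ultimately show ?thesis by (simp add: jacobi_def)
  qed
  have "{x. jacobi p lam beta f x \<noteq> 0} \<subseteq> S'" using Jz by blast
  then show ?thesis using S' finite_subset by (auto simp: fin_supp_def)
qed

lemma inner_delta: "l2_inner (\<lambda>z. if z = x then 1 else 0) v = v x"
proof -
  have "l2_inner (\<lambda>z. if z = x then 1 else 0) v = (\<Sum>z\<in>{x}. cnj (if z = x then 1 else 0) * v z)"
    unfolding l2_inner_def by (rule infsum_fin) auto
  then show ?thesis by simp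
qed

lemma delta_fin: "(\<lambda>z. if z = x then 1 else 0 :: complex) \<in> fin_supp"
  by (simp add: fin_supp_def)

lemma G_sub:
  assumes fin: "\<forall>x. finite (children p x)"
  shows "jacobi_graph p lam beta \<subseteq> graph_closure (jacobi_graph p lam beta)"
proof
  fix fg assume "fg \<in> jacobi_graph p lam beta"
  then obtain f where fg: "fg = (f, jacobi p lam beta f)" and f: "f \<in> fin_supp"
    by (auto simp: jacobi_graph_def)
  have l: "f \<in> l2" "jacobi p lam beta f \<in> l2" using f jac_fin[OF fin f] by (simp_all add: fin_supp_l2)
  show "fg \<in> graph_closure (jacobi_graph p lam beta)"
    unfolding fg graph_closure_def
    apply (simp add: l)
    apply (rule exI[of _ "\<lambda>_. f"], rule exI[of _ "\<lambda>_. jacobi p lam beta f"])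
    using f by (auto simp: jacobi_graph_def l2_norm_def)
qed

lemma closure_elem:
  assumes "(u, w) \<in> graph_closure (jacobi_graph p lam beta)"
  obtains U where "\<And>n. U n \<in> fin_supp" "u \<in> l2" "w \<in> l2"
    "(\<lambda>n. l2_norm (\<lambda>x. U n x - u x)) \<longlonglongrightarrow> 0"
    "(\<lambda>n. l2_norm (\<lambda>x. jacobi p lam beta (U n) x - w x)) \<longlonglongrightarrow> 0"
proof -
  from assms obtain F H where FH: "\<forall>n. (F n, H n) \<in> jacobi_graph p lam beta" "u \<in> l2" "w \<in> l2"
    "(\<lambda>n. l2_norm (\<lambda>x. F n x - u x)) \<longlonglongrightarrow> 0" "(\<lambda>n. l2_norm (\<lambda>x. H n x - w x)) \<longlonglongrightarrow> 0"
    by (auto simp: graph_closure_def)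
  have "F n \<in> fin_supp \<and> H n = jacobi p lam beta (F n)" for n
    using FH(1)[rule_format, of n] by (auto simp: jacobi_graph_def)
  then show ?thesis using that[of F] FH by auto
qed

lemma cl_adjG:
  assumes fin: "\<forall>x. finite (children p x)"
    and uw: "(u, w) \<in> graph_closure (jacobi_graph p lam beta)" and f: "f \<in> fin_supp"
  shows "l2_inner (jacobi p lam beta f) u = l2_inner f w"
proof -
  obtain U where U: "\<And>n. U n \<in> fin_supp" "u \<in> l2" "w \<in> l2"
    "(\<lambda>n. l2_norm (\<lambda>x. U n x - u x)) \<longlonglongrightarrow> 0"
    "(\<lambda>n. l2_norm (\<lambda>x. jacobi p lam beta (U n) x - w x)) \<longlonglongrightarrow> 0"
    using closure_elem[OF uw] by blast
  have fl: "f \<in> l2" "jacobi p lam beta f \<in> l2" using f jac_fin[OF fin f] by (simp_all add: fin_supp_l2)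
  have Ul: "U n \<in> l2" "jacobi p lam beta (U n) \<in> l2" for n
    using U(1)[of n] jac_fin[OF fin U(1)[of n]] by (simp_all add: fin_supp_l2)
  have eq: "l2_inner (jacobi p lam beta f) (U n) = l2_inner f (jacobi p lam beta (U n))" for n
    by (rule jac_sym[OF fin f])
  have l1: "(\<lambda>n. l2_inner (jacobi p lam beta f) (U n)) \<longlonglongrightarrow> l2_inner (jacobi p lam beta f) u"
    by (rule inner_lim_right[OF fl(2) U(2) Ul(1) U(4)])
  have l2': "(\<lambda>n. l2_inner f (jacobi p lam beta (U n))) \<longlonglongrightarrow> l2_inner f w"
    by (rule inner_lim_right[OF fl(1) U(3) Ul(2) U(5)])
  show ?thesis using LIMSEQ_unique[OF l1] l2' eq by simp
qed

lemma cl_sym: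
  assumes fin: "\<forall>x. finite (children p x)"
    and uw: "(u, w) \<in> graph_closure (jacobi_graph p lam beta)"
    and fg: "(f, g) \<in> graph_closure (jacobi_graph p lam beta)"
  shows "l2_inner g u = l2_inner f w"
proof -
  obtain U where U: "\<And>n. U n \<in> fin_supp" "f \<in> l2" "g \<in> l2"
    "(\<lambda>n. l2_norm (\<lambda>x. U n x - f x)) \<longlonglongrightarrow> 0"
    "(\<lambda>n. l2_norm (\<lambda>x. jacobi p lam beta (U n) x - g x)) \<longlonglongrightarrow> 0"
    using closure_elem[OF fg] by blast
  have ul: "u \<in> l2" "w \<in> l2" using uw by (auto simp: graph_closure_def)
  have Ul: "U n \<in> l2" "jacobi p lam beta (U n) \<in> l2" for n
    using U(1)[of n] jac_fin[OF fin U(1)[of n]] by (simp_all add: fin_supp_l2)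
  have eq: "l2_inner (jacobi p lam beta (U n)) u = l2_inner (U n) w" for n
    by (rule cl_adjG[OF fin uw U(1)])
  have l1: "(\<lambda>n. l2_inner (jacobi p lam beta (U n)) u) \<longlonglongrightarrow> l2_inner g u"
    by (rule inner_lim_left[OF U(3) ul(1) Ul(2) U(5)])
  have l2': "(\<lambda>n. l2_inner (U n) w) \<longlonglongrightarrow> l2_inner f w"
    by (rule inner_lim_left[OF U(2) ul(2) Ul(1) U(4)])
  show ?thesis using LIMSEQ_unique[OF l1] l2' eq by simp
qed

lemma adj_formal:
  fixes p :: "'v \<Rightarrow> 'v"
  assumes fin: "\<forall>x. finite (children p x)"
    and uw: "(u, w) \<in> adjoint_graph (graph_closure (jacobi_graph p lam beta))"
  shows "w = jacobi p lam beta u"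
proof
  fix x :: 'v
  let ?d = "\<lambda>z. if z = x then 1 else 0 :: complex"
  have "(?d, jacobi p lam beta ?d) \<in> jacobi_graph p lam beta"
    using delta_fin by (auto simp: jacobi_graph_def)
  then have "(?d, jacobi p lam beta ?d) \<in> graph_closure (jacobi_graph p lam beta)"
    using G_sub[OF fin] by blast
  then have "l2_inner (jacobi p lam beta ?d) u = l2_inner ?d w"
    using uw by (auto simp: adjoint_graph_def)
  also have "\<dots> = w x" by (rule inner_delta)
  finally have "w x = l2_inner (jacobi p lam beta ?d) u" by simp
  also have "\<dots> = l2_inner ?d (jacobi p lam beta u)" by (rule jac_sym[OF fin delta_fin])
  also have "\<dots> = jacobi p lam beta u x" by (rule inner_delta)
  finally show "w x = jacobi p lam beta u x" .
qed

lemma dense: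
  assumes fin: "\<forall>x. finite (children p x)"
  shows "densely_defined (graph_closure (jacobi_graph p lam beta))"
  unfolding densely_defined_def
proof (intro conjI ballI)
  show "op_domain (graph_closure (jacobi_graph p lam beta)) \<subseteq> l2"
    by (auto simp: op_domain_def graph_closure_def)
  fix f :: "'a \<Rightarrow> complex" assume f: "f \<in> l2"
  have "\<forall>n. \<exists>A. finite A \<and> nsq (\<lambda>x. (if x \<in> A then f x else 0) - f x) \<le> inverse (real (Suc n))"
  proof
    fix n
    obtain A where A: "finite A" "\<forall>\<phi>::'a\<Rightarrow>real. (\<forall>x\<in>A. \<phi> x = 1) \<longrightarrow> (\<forall>x. 0 \<le> \<phi> x \<and> \<phi> x \<le> 1)
           \<longrightarrow> nsq (\<lambda>x. complex_of_real (\<phi> x) * f x - f x) \<le> inverse (real (Suc n))"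
      using tail[OF f, of "inverse (real (Suc n))"] by auto
    have "nsq (\<lambda>x. complex_of_real (if x \<in> A then 1 else 0) * f x - f x) \<le> inverse (real (Suc n))"
      using A(2)[rule_format, of "\<lambda>x. if x \<in> A then 1 else 0"] by auto
    moreover have "(\<lambda>x. complex_of_real (if x \<in> A then 1 else 0) * f x - f x) = (\<lambda>x. (if x \<in> A then f x else 0) - f x)"
      by auto
    ultimately show "\<exists>A. finite A \<and> nsq (\<lambda>x. (if x \<in> A then f x else 0) - f x) \<le> inverse (real (Suc n))"
      using A(1) by auto
  qed
  then obtain A where A: "\<And>n. finite (A n)" "\<And>n. nsq (\<lambda>x. (if x \<in> A n then f x else 0) - f x) \<le> inverse (real (Suc n))"
    by metis
  define F where "F n = (\<lambda>x. if x \<in> A n then f x else 0)" for n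
  have Ff: "F n \<in> fin_supp" for n
    using A(1)[of n] by (auto simp: fin_supp_def F_def elim!: finite_subset[rotated])
  show "\<exists>F. (\<forall>n. F n \<in> op_domain (graph_closure (jacobi_graph p lam beta))) \<and>
        (\<lambda>n. l2_norm (\<lambda>x. F n x - f x)) \<longlonglongrightarrow> 0"
  proof (intro exI conjI allI)
    fix n
    have "(F n, jacobi p lam beta (F n)) \<in> jacobi_graph p lam beta" using Ff by (auto simp: jacobi_graph_def)
    then have "(F n, jacobi p lam beta (F n)) \<in> graph_closure (jacobi_graph p lam beta)"
      using G_sub[OF fin] by blast
    then show "F n \<in> op_domain (graph_closure (jacobi_graph p lam beta))"
      unfolding op_domain_def by (metis fst_conv image_eqI)
  next
    show "(\<lambda>n. l2_norm (\<lambda>x. F n x - f x)) \<longlonglongrightarrow> 0"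
      unfolding nsq_tendsto
      by (rule nsq_squeeze[of _ "\<lambda>n. inverse (real (Suc n))"])
         (use A(2) LIMSEQ_inverse_real_of_nat in \<open>auto simp: F_def\<close>)
  qed
qed



context spine begin

lemma tail_conv:
  assumes u: "u \<in> l2"
  shows "(\<lambda>N. nsq (\<lambda>x. complex_of_real (cut N x) * u x - u x)) \<longlonglongrightarrow> 0"
proof (rule LIMSEQ_I)
  fix r :: real assume r: "0 < r"
  obtain F where F: "finite F" "\<forall>\<phi>::'v\<Rightarrow>real. (\<forall>x\<in>F. \<phi> x = 1) \<longrightarrow> (\<forall>x. 0 \<le> \<phi> x \<and> \<phi> x \<le> 1)
           \<longrightarrow> nsq (\<lambda>x. complex_of_real (\<phi> x) * u x - u x) \<le> r / 2"
    using tail[OF u, of "r/2"] r by auto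
  obtain N0 where N0: "\<forall>N\<ge>N0. \<forall>x\<in>F. cut N x = 1" using cut_eventually_one[OF F(1)] by blast
  show "\<exists>no. \<forall>n\<ge>no. norm (nsq (\<lambda>x. complex_of_real (cut n x) * u x - u x) - 0) < r"
  proof (intro exI allI impI)
    fix n assume "N0 \<le> n"
    then have "nsq (\<lambda>x. complex_of_real (cut n x) * u x - u x) \<le> r / 2"
      using F(2)[rule_format, of "cut n"] N0 cut_bounds by auto
    then show "norm (nsq (\<lambda>x. complex_of_real (cut n x) * u x - u x) - 0) < r"
      using r nsq_nonneg[of "\<lambda>x. complex_of_real (cut n x) * u x - u x"] by simp
  qed
qed

lemma approx:
  assumes u: "u \<in> l2" and w: "jacobi p lam beta u \<in> l2"
  shows "(u, jacobi p lam beta u) \<in> graph_closure (jacobi_graph p lam beta)"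
proof -
  define F where "F N = (\<lambda>x. complex_of_real (cut N x) * u x)" for N
  have Ff: "F N \<in> fin_supp" for N
    using cut_fin[of N] by (auto simp: fin_supp_def F_def elim!: finite_subset[rotated])
  have FG: "(F N, jacobi p lam beta (F N)) \<in> jacobi_graph p lam beta" for N
    using Ff by (auto simp: jacobi_graph_def)
  have c1: "(\<lambda>N. l2_norm (\<lambda>x. F N x - u x)) \<longlonglongrightarrow> 0"
    unfolding nsq_tendsto F_def by (rule tail_conv[OF u])
  let ?w = "jacobi p lam beta u"
  have dec: "(\<lambda>x. jacobi p lam beta (F N) x - ?w x)
      = (\<lambda>x. (complex_of_real (cut N x) * ?w x - ?w x) + comm beta N u x)" for N
    by (auto simp: comm_def F_def)
  have l2b: "(\<lambda>x. complex_of_real (cut N x) * ?w x) \<in> l2" for N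
  proof (rule l2_dom(1)[OF w])
    fix x
    have "cmod (complex_of_real (cut N x) * ?w x) = \<bar>cut N x\<bar> * cmod (?w x)" by (simp add: norm_mult)
    also have "\<dots> \<le> 1 * cmod (?w x)" using cut_bounds[of N x] by (intro mult_right_mono) auto
    finally show "cmod (complex_of_real (cut N x) * ?w x) \<le> cmod (?w x)" by simp
  qed
  have l2a: "(\<lambda>x. complex_of_real (cut N x) * ?w x - ?w x) \<in> l2" for N
    by (rule l2_diff(1)[OF l2b w])
  have bnd: "nsq (\<lambda>x. jacobi p lam beta (F N) x - ?w x)
     \<le> 2 * nsq (\<lambda>x. complex_of_real (cut N x) * ?w x - ?w x) + 2 * (4 * (1 / real (Suc N))\<^sup>2 * nsq u)" for N
  proof -
    have "nsq (\<lambda>x. jacobi p lam beta (F N) x - ?w x)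
       \<le> 2 * nsq (\<lambda>x. complex_of_real (cut N x) * ?w x - ?w x) + 2 * nsq (comm beta N u)"
      unfolding dec by (rule l2_add(2)[OF l2a comm_bound(1)[OF u]])
    then show ?thesis using comm_bound(2)[OF u, of beta N] by simp
  qed
  have inv: "(\<lambda>N. 1 / real (Suc N)) \<longlonglongrightarrow> 0"
    using LIMSEQ_inverse_real_of_nat by (simp add: inverse_eq_divide)
  have lim: "(\<lambda>N. 2 * nsq (\<lambda>x. complex_of_real (cut N x) * ?w x - ?w x) + 2 * (4 * (1 / real (Suc N))\<^sup>2 * nsq u)) \<longlonglongrightarrow> 0"
  proof -
    have "(\<lambda>N. 2 * nsq (\<lambda>x. complex_of_real (cut N x) * ?w x - ?w x) + 2 * (4 * (1 / real (Suc N))\<^sup>2 * nsq u))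
        \<longlonglongrightarrow> 2 * 0 + 2 * (4 * 0\<^sup>2 * nsq u)"
      by (intro tendsto_intros tail_conv[OF w] inv)
    then show ?thesis by simp
  qed
  have c2: "(\<lambda>N. l2_norm (\<lambda>x. jacobi p lam beta (F N) x - ?w x)) \<longlonglongrightarrow> 0"
    unfolding nsq_tendsto by (rule nsq_squeeze[OF bnd lim])
  show ?thesis unfolding graph_closure_def
    apply (simp add: u w)
    apply (rule exI[of _ F], rule exI[of _ "\<lambda>N. jacobi p lam beta (F N)"])
    using FG c1 c2 by blast
qed

lemma main:
  "essentially_selfadjoint (jacobi_graph p lam beta)"
proof -
  let ?C = "graph_closure (jacobi_graph p lam beta)"
  have "adjoint_graph ?C = ?C"
  proof
    show "adjoint_graph ?C \<subseteq> ?C"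
    proof
      fix uw assume uw: "uw \<in> adjoint_graph ?C"
      obtain u w where uw': "uw = (u, w)" by (cases uw)
      have ul: "u \<in> l2" "w \<in> l2" using uw uw' by (auto simp: adjoint_graph_def)
      have "w = jacobi p lam beta u" using adj_formal[OF fin_ch] uw uw' by blast
      then show "uw \<in> ?C" using approx[OF ul(1)] ul(2) uw' by simp
    qed
  next
    show "?C \<subseteq> adjoint_graph ?C"
    proof
      fix uw assume uw: "uw \<in> ?C"
      obtain u w where uw': "uw = (u, w)" by (cases uw)
      have ul: "u \<in> l2" "w \<in> l2" using uw uw' by (auto simp: graph_closure_def)
      show "uw \<in> adjoint_graph ?C"
        unfolding adjoint_graph_def uw' using ul cl_sym[OF fin_ch] uw uw' by auto
    qed
  qed
  then show ?thesis using dense[OF fin_ch]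
    by (simp add: essentially_selfadjoint_def selfadjoint_op_def)
qed

end

theorem theorem6:
  fixes lvl :: "'v \<Rightarrow> nat" and p :: "'v \<Rightarrow> 'v"
    and lam beta :: "'v \<Rightarrow> real" and xs :: "nat \<Rightarrow> 'v"
  assumes "level_tree lvl p"
    and "\<forall>x. lam x > 0"
    and "\<forall>n. lvl (xs n) = n"
    and "\<forall>n. p (xs n) = xs (Suc n)"
    and "\<not> summable (\<lambda>n. 1 / lam (xs (Suc n)))"
  shows "essentially_selfadjoint (jacobi_graph p lam beta)"
proof -
  interpret spine lvl p lam xs using assms by (unfold_locales) auto
  show ?thesis by (rule main)
qed


end
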